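(* Let $q$ be an odd prime power, $m>1$ an odd integer, $\omega$ a primitive element of $\mathbb{F}_{q^m}$, $k=\frac{m-1}{2}$, and let $A$, $H_1,\dots,H_k$, $a_1,\dots,a_k$, $b$ and $B$ be as defined in the context below. Then for every integer $a$, $$\psi(\omega^aB)=\begin{cases}q^{\frac{m-1}{2}}\frac{-1+G_q(\eta')}{2},&\text{if } \mathrm{Tr}_{q^m/q}(\omega^ab)\in C_0^{(2,q)} \text{ and } \omega^a\in(H_1\cap\dots\cap H_k)\setminus A,\\ q^{\frac{m-1}{2}}\frac{-1-G_q(\eta')}{2},&\text{if } \mathrm{Tr}_{q^m/q}(\omega^ab)\in C_1^{(2,q)} \text{ and } \omega^a\in(H_1\cap\dots\cap H_k)\setminus A,\\ \frac{q^{\frac{m-1}{2}}(q-1)}{2},&\text{if } \omega^a\in A\cap H_1\cap\dots\cap H_k,\\ 0,&\text{otherwise.}\end{cases}$$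
   Context: $\psi$ is the canonical additive character $\psi(x)=e^{2\pi i\,\mathrm{Tr}_{q^m/p}(x)/p}$ of $\mathbb{F}_{q^m}$ ($p$ the characteristic), $\psi(S)=\sum_{x\in S}\psi(x)$. $\eta'$ is the quadratic character of $\mathbb{F}_q$ and $G_q(\eta')=\sum_{x\in\mathbb{F}_q^\ast}\eta'(x)e^{2\pi i\,\mathrm{Tr}_{q/p}(x)/p}$. $C_0^{(2,q)}$ and $C_1^{(2,q)}$ are the nonzero squares and the nonsquares of $\mathbb{F}_q$. $A=\{x\in\mathbb{F}_{q^m}^\ast:\mathrm{Tr}_{q^m/q}(x^2)=0\}$. Choose $a_1\in A$ and, for $2\le\ell\le k$, $a_\ell\in A\cap H_1\cap\dots\cap H_{\ell-1}$, with $a_1,\dots,a_k$ linearly independent over $\mathbb{F}_q$, where $H_\ell=\{x\in\mathbb{F}_{q^m}^\ast:\mathrm{Tr}_{q^m/q}(xa_\ell)=0\}$. Fix $b\in(H_1\cap\dots\cap H_k)\setminus A$, and let $B=\{a_1x_1+\dots+a_kx_k+by: x_1,\dots,x_k\in\mathbb{F}_q,\ y\in C_0^{(2,q)}\}$. *)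

theory Defs
  imports Complex_Main "HOL-Computational_Algebra.Primes"
begin

definition field_trace :: "nat \<Rightarrow> nat \<Rightarrow> 'a::field \<Rightarrow> 'a" where
  "field_trace r n x = (\<Sum>i<n. x ^ (r ^ i))"

text \<open>Canonical additive character of F_{p^n} (p the characteristic):
  x |-> exp(2 pi i Tr_{p^n/p}(x)/p), where Tr(x) lies in the prime field,
  identified with {0..p-1}.\<close>
definition canon_char :: "nat \<Rightarrow> nat \<Rightarrow> 'a::field \<Rightarrow> complex" where
  "canon_char p n x =
     cis (2 * pi * real (THE j. j < p \<and> of_nat j = field_trace p n x) / real p)"

definition subfield_q :: "nat \<Rightarrow> 'a::field set" where
  "subfield_q q = {x. x ^ q = x}"

definition C0 :: "nat \<Rightarrow> 'a::field set" where
  "C0 q = {x \<in> subfield_q q. x \<noteq> 0 \<and> (\<exists>y\<in>subfield_q q. y ^ 2 = x)}"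

definition C1 :: "nat \<Rightarrow> 'a::field set" where
  "C1 q = (subfield_q q - {0}) - C0 q"

definition quad_char :: "nat \<Rightarrow> 'a::field \<Rightarrow> complex" where
  "quad_char q x = (if x \<in> C0 q then 1 else if x \<in> C1 q then -1 else 0)"

definition gauss_quad :: "nat \<Rightarrow> nat \<Rightarrow> 'a::field itself \<Rightarrow> complex" where
  "gauss_quad p e _ = (\<Sum>x\<in>subfield_q (p ^ e) - {0::'a}. quad_char (p ^ e) x * canon_char p e x)"

definition Aset :: "nat \<Rightarrow> nat \<Rightarrow> 'a::field set" where
  "Aset q m = {x. x \<noteq> 0 \<and> field_trace q m (x ^ 2) = 0}"

definition Hset :: "nat \<Rightarrow> nat \<Rightarrow> 'a::field \<Rightarrow> 'a set" where
  "Hset q m c = {x. x \<noteq> 0 \<and> field_trace q m (x * c) = 0}"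

end

theory Submission
  imports Defs "HOL-Library.FuncSet" "HOL-Library.Real_Mod"
    "HOL-Computational_Algebra.Polynomial"
begin


definition idxp :: "nat \<Rightarrow> nat \<Rightarrow> 'a::field \<Rightarrow> nat" where
  "idxp p n x = (THE j. j < p \<and> of_nat j = field_trace p n x)"

lemma char_sum_zero:
  fixes chi :: "'b::ab_group_add \<Rightarrow> complex"
  assumes S: "finite S" and cl: "\<And>x y. x \<in> S \<Longrightarrow> y \<in> S \<Longrightarrow> x + y \<in> S"
    and z: "z \<in> S" and hom: "\<And>x. x \<in> S \<Longrightarrow> chi (x + z) = chi x * chi z"
    and nt: "chi z \<noteq> 1"
  shows "(\<Sum>x\<in>S. chi x) = 0"
proof -
  have inj: "inj_on (\<lambda>x. x + z) S" by (auto intro: inj_onI)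
  have im: "(\<lambda>x. x + z) ` S = S"
    by (rule endo_inj_surj[OF S _ inj]) (use cl z in auto)
  have "(\<Sum>x\<in>S. chi x) = (\<Sum>x\<in>(\<lambda>x. x + z) ` S. chi x)" using im by simp
  also have "\<dots> = (\<Sum>x\<in>S. chi (x + z))" by (simp add: sum.reindex[OF inj])
  also have "\<dots> = chi z * (\<Sum>x\<in>S. chi x)" by (simp add: hom sum_distrib_left mult.commute)
  finally have "(1 - chi z) * (\<Sum>x\<in>S. chi x) = 0" by (simp add: algebra_simps)
  thus ?thesis using nt by simp
qed

lemma dvd_pow_minus1: "(q::nat) \<ge> 1 \<Longrightarrow> (q - 1) dvd (q ^ n - 1)"
proof (induction n)
  case (Suc n)
  have "q ^ n \<ge> 1" using Suc.prems by simp
  hence eq: "q ^ Suc n - 1 = q * (q ^ n - 1) + (q - 1)" using Suc.prems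
    by (simp add: algebra_simps diff_mult_distrib2)
  show ?case unfolding eq by (intro dvd_add dvd_mult Suc.IH[OF Suc.prems] dvd_refl)
qed simp

lemma lin2: assumes a: "(x::complex) + y = -1" and b: "g + y = x"
  shows "x = (-1+g)/2" "y = (-1-g)/2"
proof -
  have "2 * x = -1 + g" using a b by algebra
  thus "x = (-1+g)/2" by (simp add: field_simps)
  have "2 * y = -1 - g" using a b by algebra
  thus "y = (-1-g)/2" by (simp add: field_simps)
qed

locale ff =
  fixes p e q m :: nat and w :: "'a::{finite,field}"
  assumes p_prime: "prime p" and p_odd: "odd p" and e_ge: "e \<ge> 1" and q_def: "q = p ^ e"
    and char_p: "of_nat p = (0::'a)"
    and card_U: "card (UNIV :: 'a set) = q ^ m"
    and m_gt: "m > 1"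
    and w_nz: "w \<noteq> 0" and w_gen: "\<forall>x::'a. x \<noteq> 0 \<longrightarrow> (\<exists>n::nat. x = w ^ n)"
begin

lemma CHAR_eq: "CHAR('a) = p"
proof -
  have "CHAR('a) dvd p" using char_p by (simp add: of_nat_eq_0_iff_char_dvd)
  moreover have "CHAR('a) \<noteq> 1" by simp
  ultimately show ?thesis using p_prime by (meson prime_nat_iff)
qed

lemma CHAR_prime: "prime CHAR('a)" using CHAR_eq p_prime by simp

lemma p_gt1: "p > 1" using p_prime prime_gt_1_nat by blast

lemma frob_add: "(x + y :: 'a) ^ (p ^ n) = x ^ (p ^ n) + y ^ (p ^ n)"
  by (rule freshmans_dream') (auto simp: CHAR_eq CHAR_prime p_prime)

lemma frob_sum: "(sum (f :: 'b \<Rightarrow> 'a) A) ^ (p ^ n) = (\<Sum>i\<in>A. f i ^ (p ^ n))"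
  by (rule freshmans_dream_sum') (auto simp: CHAR_eq CHAR_prime p_prime)

lemma frob_neg: "(- x :: 'a) ^ (p ^ n) = - (x ^ (p ^ n))"
proof -
  have "odd (p ^ n)" using p_odd by simp
  thus ?thesis by (simp add: power_minus_odd)
qed

lemma frob_diff: "(x - y :: 'a) ^ (p ^ n) = x ^ (p ^ n) - y ^ (p ^ n)"
  using frob_add[of x "-y" n] frob_neg[of y n] by simp

lemma pow_card: "(x::'a) ^ card (UNIV :: 'a set) = x"
proof (cases "x = 0")
  case False
  have "x * (\<Prod>y\<in>UNIV-{0}. x * y) = x * x ^ (card (UNIV :: 'a set) - 1) * \<Prod>(UNIV-{0})"
    by (simp add: prod.distrib mult_ac)
  also have "x * x ^ (card (UNIV :: 'a set) - 1) = x ^ Suc (card (UNIV :: 'a set) - 1)"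
    by (subst power_Suc) auto
  also have "Suc (card (UNIV :: 'a set) - 1) = card (UNIV :: 'a set)"
    using finite_UNIV_card_ge_0[where ?'a = 'a] by simp
  also have "(\<Prod>y\<in>UNIV-{0}. x * y) = (\<Prod>y\<in>UNIV-{0}. y)"
    by (rule prod.reindex_bij_witness[of _ "\<lambda>y. y / x" "\<lambda>y. x * y"]) (use False in auto)
  finally show ?thesis
    by simp
qed (use finite_UNIV_card_ge_0[where ?'a = 'a] in auto)

lemma pow_qm: "(x::'a) ^ (q ^ m) = x" using pow_card card_U by simp

lemma card_U_p: "card (UNIV :: 'a set) = p ^ (e * m)"
  using card_U q_def by (simp add: power_mult)

lemma card_pow_fix_le:
  assumes "n > 1"
  shows "card {x::'a. x ^ n = x} \<le> n"
proof -
  define P where "P = (monom (1::'a) n + [:0,-1:])"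
  have deg: "degree P = n" unfolding P_def using assms
    by (subst degree_add_eq_left) (auto simp: degree_monom_eq)
  hence "P \<noteq> 0" using assms by auto
  moreover have "{x::'a. x ^ n = x} = {x. poly P x = 0}"
    unfolding P_def by (auto simp: poly_monom)
  ultimately show ?thesis using card_poly_roots_bound[of P] deg by simp
qed

lemma trace_poly_roots:
  assumes "n \<ge> 1"
  shows "card {x::'a. field_trace p n x = 0} \<le> p ^ (n - 1)"
proof -
  define P where "P = (\<Sum>i<n. monom (1::'a) (p ^ i))"
  have inj: "p ^ i = p ^ j \<longleftrightarrow> i = j" for i j using p_gt1 by (simp add: power_inject_exp)
  have c: "coeff P (p ^ (n - 1)) = 1"
  proof -
    have "coeff P (p ^ (n - 1)) = (\<Sum>i<n. if i = n - 1 then 1 else 0)"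
      unfolding P_def coeff_sum by (intro sum.cong) (auto simp: coeff_monom inj)
    also have "\<dots> = 1" using assms by simp
    finally show ?thesis .
  qed
  have dle: "degree P \<le> p ^ (n - 1)"
    unfolding P_def
  proof (rule degree_sum_le)
    fix i assume "i \<in> {..<n}"
    hence "p ^ i \<le> p ^ (n - 1)" using p_gt1 by (intro power_increasing) auto
    thus "degree (monom (1::'a) (p ^ i)) \<le> p ^ (n - 1)" by (simp add: degree_monom_eq)
  qed auto
  have "P \<noteq> 0" using c by auto
  have deg: "degree P = p ^ (n - 1)" using c dle by (metis le_antisym le_degree one_neq_zero)
  have "{x::'a. field_trace p n x = 0} = {x. poly P x = 0}"
    unfolding P_def field_trace_def by (auto simp: poly_sum poly_monom)
  thus ?thesis using card_poly_roots_bound[OF \<open>P \<noteq> 0\<close>] deg by simp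
qed

lemma of_nat_pow_p: "(of_nat j :: 'a) ^ p = of_nat j"
proof (induction j)
  case 0 thus ?case using p_gt1 by simp
next
  case (Suc j)
  have "(of_nat (Suc j) :: 'a) ^ p = (of_nat j + 1) ^ (p ^ 1)" by (simp add: add.commute)
  also have "\<dots> = of_nat j ^ (p ^ 1) + 1 ^ (p ^ 1)" by (rule frob_add)
  finally show ?case using Suc by simp
qed

lemma of_nat_zero_iff: "(of_nat n :: 'a) = 0 \<longleftrightarrow> p dvd n"
  using of_nat_eq_0_iff_char_dvd[where 'a='a, of n] CHAR_eq by simp

lemma of_nat_mod: "(of_nat n :: 'a) = of_nat (n mod p)"
proof -
  have "(of_nat n :: 'a) = of_nat (p * (n div p) + n mod p)" by simp
  also have "\<dots> = of_nat (n mod p)" by (simp only: of_nat_add of_nat_mult char_p) simp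
  finally show ?thesis .
qed

lemma of_nat_inj_p: "i < p \<Longrightarrow> j < p \<Longrightarrow> (of_nat i :: 'a) = of_nat j \<Longrightarrow> i = j"
proof -
  have *: "i < j \<Longrightarrow> j < p \<Longrightarrow> (of_nat i :: 'a) = of_nat j \<Longrightarrow> False" for i j
  proof -
    assume a: "i < j" "j < p" "(of_nat i :: 'a) = of_nat j"
    have "(of_nat (j - i) :: 'a) = of_nat j - of_nat i" using a by (simp add: of_nat_diff)
    hence "(of_nat (j - i) :: 'a) = 0" using a by simp
    hence "p dvd (j - i)" using of_nat_zero_iff by blast
    thus False using a by (simp add: nat_dvd_not_less)
  qed
  assume "i < p" "j < p" "(of_nat i :: 'a) = of_nat j"
  thus "i = j" using *[of i j] *[of j i] by (metis linorder_neqE_nat)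
qed

lemma prime_field: "(x::'a) ^ p = x \<Longrightarrow> \<exists>j<p. of_nat j = x"
proof -
  assume x: "x ^ p = x"
  have sub: "of_nat ` {..<p} \<subseteq> {x::'a. x ^ p = x}" using of_nat_pow_p by auto
  have "inj_on (of_nat :: nat \<Rightarrow> 'a) {..<p}" by (auto intro!: inj_onI of_nat_inj_p)
  hence c: "card (of_nat ` {..<p} :: 'a set) = p" by (simp add: card_image)
  have "card {x::'a. x ^ p = x} \<le> p" using card_pow_fix_le p_gt1 by blast
  moreover have "p \<le> card {x::'a. x ^ p = x}" using card_mono[OF _ sub] c by simp
  ultimately have "of_nat ` {..<p} = {x::'a. x ^ p = x}" using sub c
    by (intro card_subset_eq) auto
  with x show ?thesis by (metis (mono_tags, lifting) imageE lessThan_iff mem_Collect_eq)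
qed

lemma trace_add: "r = p ^ j \<Longrightarrow> field_trace r n (x + y) = field_trace r n x + field_trace r n (y::'a)"
  unfolding field_trace_def by (simp add: frob_add sum.distrib flip: power_mult)

lemma trace_frob:
  assumes r: "r = p ^ j" and x: "(x::'a) ^ (r ^ n) = x"
  shows "(field_trace r n x) ^ r = field_trace r n x"
proof -
  define f where "f i = x ^ (r ^ i)" for i
  have "(field_trace r n x) ^ r = (\<Sum>i<n. (x ^ (r ^ i)) ^ r)"
    unfolding field_trace_def r by (rule frob_sum)
  also have "\<dots> = (\<Sum>i<n. f (Suc i))" by (simp add: f_def power_mult[symmetric] mult.commute)
  also have "\<dots> = (\<Sum>i<n. f i) + f n - f 0"
    using sum.lessThan_Suc_shift[of f n] sum.lessThan_Suc[of f n] by (simp add: algebra_simps)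
  also have "f n = f 0" using x by (simp add: f_def)
  finally show ?thesis by (simp add: field_trace_def f_def)
qed


lemma idx:
  fixes x :: 'a and n :: nat
  assumes "x ^ (p ^ n) = x"
  shows "idxp p n x < p" "of_nat (idxp p n x) = field_trace p n x"
proof -
  have "(field_trace p n x) ^ p = field_trace p n x"
    using trace_frob[of p 1 x n] assms by simp
  then obtain j where j: "j < p" "of_nat j = field_trace p n x" using prime_field by blast
  have "idxp p n x = j" unfolding idxp_def
    by (rule the_equality) (use j of_nat_inj_p in auto)
  thus "idxp p n x < p" "of_nat (idxp p n x) = field_trace p n x" using j by auto
qed

lemma idx_unique:
  assumes "(x::'a) ^ (p ^ n) = x" "j < p" "of_nat j = field_trace p n x"
  shows "idxp p n x = j"
  using idx[OF assms(1)] assms of_nat_inj_p by metis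

lemma canon_char_idx: "canon_char p n x = cis (2 * pi * real (idxp p n x) / real p)"
  unfolding canon_char_def idxp_def ..

lemma cis_mod_p: "cis (2 * pi * real j / real p) = cis (2 * pi * real (j mod p) / real p)"
proof -
  have "real j = real p * real (j div p) + real (j mod p)"
    by (metis of_nat_add of_nat_mult div_mult_mod_eq mult.commute)
  hence "2 * pi * real j / real p = 2 * pi * real (j div p) + 2 * pi * real (j mod p) / real p"
    using p_gt1 by (simp add: field_simps)
  hence "cis (2 * pi * real j / real p) = cis (2 * pi * real (j div p)) * cis (2 * pi * real (j mod p) / real p)"
    by (simp only: cis_mult)
  also have "cis (2 * pi * real (j div p)) = 1" by (rule cis_multiple_2pi) simp
  finally show ?thesis by simp
qed

lemma canon_add:
  assumes x: "(x::'a) ^ (p ^ n) = x" and y: "y ^ (p ^ n) = y"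
  shows "canon_char p n (x + y) = canon_char p n x * canon_char p n y"
proof -
  have xy: "(x + y) ^ (p ^ n) = x + y" using x y frob_add by simp
  have "of_nat ((idxp p n x + idxp p n y) mod p) = field_trace p n (x + y)"
    using idx(2)[OF x] idx(2)[OF y] trace_add[of p 1 n x y]
    by (simp flip: of_nat_mod)
  hence e: "idxp p n (x + y) = (idxp p n x + idxp p n y) mod p"
    using idx_unique[OF xy] p_gt1 by simp
  show ?thesis unfolding canon_char_idx e
    by (simp add: cis_mult flip: cis_mod_p add_divide_distrib distrib_left)
qed

lemma canon_zero: "canon_char p n (0::'a) = 1"
proof -
  have "idxp p n (0::'a) = 0"
    by (rule idx_unique) (use p_gt1 in \<open>auto simp: field_trace_def power_0_left\<close>)
  thus ?thesis unfolding canon_char_idx by simp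
qed

lemma canon_nontriv:
  assumes x: "(x::'a) ^ (p ^ n) = x" and t: "field_trace p n x \<noteq> 0"
  shows "canon_char p n x \<noteq> 1"
proof
  assume "canon_char p n x = 1"
  then obtain z :: int where z: "2 * pi * real (idxp p n x) / real p = of_int z * (2 * pi)"
    unfolding canon_char_idx cis_eq_1_iff by blast
  have j0: "idxp p n x \<noteq> 0" using idx(2)[OF x] t by (metis of_nat_0)
  have jp: "idxp p n x < p" using idx(1)[OF x] .
  from z have "real (idxp p n x) = of_int z * real p" using p_gt1 by (simp add: field_simps)
  hence "int (idxp p n x) = z * int p" by (metis of_int_eq_iff of_int_mult of_int_of_nat_eq)
  with j0 jp show False
    by (metis dvd_triv_right int_dvd_int_iff nat_dvd_not_less not_gr0 of_nat_0_less_iff)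
qed

abbreviation F :: "'a set" where "F \<equiv> subfield_q q"

lemma q_gt1: "q > 1"
proof -
  have "0 < e" using e_ge by simp
  thus ?thesis using one_less_power[OF p_gt1, of e] q_def by simp
qed
lemma q_ge3: "q \<ge> 3"
proof -
  have "p \<ge> 3" using p_gt1 p_odd by (cases "p = 2") auto
  moreover have "p ^ 1 \<le> p ^ e" by (rule power_increasing) (use e_ge p_gt1 in auto)
  hence "p \<le> q" using q_def by simp
  ultimately show ?thesis by simp
qed

lemma F_iff: "x \<in> F \<longleftrightarrow> x ^ q = x" by (simp add: subfield_q_def)

lemma F_pow: "x \<in> F \<Longrightarrow> x ^ (q ^ l) = x"
proof (induction l)
  case (Suc l)
  hence "x ^ (q ^ Suc l) = (x ^ q) ^ (q ^ l)" by (simp add: power_mult[symmetric] mult.commute)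
  thus ?case using Suc by (simp add: F_iff)
qed simp

lemma F_add: "x \<in> F \<Longrightarrow> y \<in> F \<Longrightarrow> x + y \<in> F"
  using frob_add[of x y e] by (simp add: F_iff flip: q_def)
lemma F_neg: "x \<in> F \<Longrightarrow> - x \<in> F"
  using frob_neg[of x e] by (simp add: F_iff flip: q_def)
lemma F_diff: "x \<in> F \<Longrightarrow> y \<in> F \<Longrightarrow> x - y \<in> F"
  using frob_diff[of x y e] by (simp add: F_iff flip: q_def)
lemma F_mult: "x \<in> F \<Longrightarrow> y \<in> F \<Longrightarrow> x * y \<in> F"
  unfolding F_iff by (simp add: power_mult_distrib)
lemma F_div: "x \<in> F \<Longrightarrow> y \<in> F \<Longrightarrow> x / y \<in> F"
  unfolding F_iff by (simp add: power_divide)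
lemma F_0: "0 \<in> F" using q_gt1 by (simp add: F_iff)
lemma F_1: "1 \<in> F" by (simp add: F_iff)
lemma F_pe: "x \<in> F \<Longrightarrow> x ^ (p ^ e) = x" using q_def F_iff by simp
lemma finite_F: "finite F" by simp

lemma pow_pem: "(x::'a) ^ (p ^ (e * m)) = x" using pow_qm q_def by (simp add: power_mult)

lemma Nm_pos: "card (UNIV::'a set) - 1 > 0"
proof -
  have "q ^ m \<ge> q ^ 1" using q_gt1 m_gt by (intro power_increasing) auto
  thus ?thesis using card_U q_gt1 by simp
qed

lemma w_Nm: "w ^ (card (UNIV::'a set) - 1) = 1"
proof -
  have c: "card (UNIV::'a set) = Suc (card (UNIV::'a set) - 1)" using Nm_pos by simp
  have "w * w ^ (card (UNIV::'a set) - 1) = w ^ card (UNIV::'a set)"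
    by (subst (2) c) (simp only: power_Suc)
  hence "w * w ^ (card (UNIV::'a set) - 1) = w * 1" using pow_card[of w] by simp
  thus ?thesis using w_nz by simp
qed

lemma w_order: assumes "0 < s" "s < card (UNIV::'a set) - 1" shows "w ^ s \<noteq> 1"
proof
  assume ws: "w ^ s = 1"
  have "UNIV - {0} \<subseteq> (\<lambda>n. w ^ n) ` {..<s}"
  proof
    fix x :: 'a assume "x \<in> UNIV - {0}"
    then obtain n where n: "x = w ^ n" using w_gen by auto
    have "w ^ n = w ^ (s * (n div s) + n mod s)" by simp
    also have "\<dots> = (w ^ s) ^ (n div s) * w ^ (n mod s)" by (simp only: power_add power_mult)
    finally have "w ^ n = (w ^ s) ^ (n div s) * w ^ (n mod s)" .
    hence "x = w ^ (n mod s)" using ws n by simp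
    thus "x \<in> (\<lambda>n. w ^ n) ` {..<s}" using assms by auto
  qed
  hence "card (UNIV - {0::'a}) \<le> card ((\<lambda>n. w ^ n) ` {..<s})" by (intro card_mono) auto
  also have "\<dots> \<le> s" using card_image_le[of "{..<s}" "\<lambda>n. w ^ n"] by simp
  finally show False using assms by (simp add: card_Diff_singleton)
qed

lemma card_F: "card F = q"
proof -
  define Nm where "Nm = card (UNIV::'a set) - 1"
  have Nm: "Nm = q ^ m - 1" using card_U Nm_def by simp
  have dv: "(q - 1) dvd Nm" unfolding Nm using dvd_pow_minus1 q_gt1 by simp
  define d where "d = Nm div (q - 1)"
  have Nmd: "Nm = d * (q - 1)" using dv d_def by simp
  have "Nm > 0" using Nm_pos Nm_def by simp
  hence dpos: "d > 0" using Nmd by (cases d) auto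
  define g where "g = w ^ d"
  have gnz: "g \<noteq> 0" using w_nz g_def by simp
  have inF: "g ^ j \<in> F" for j
  proof -
    have "(g ^ j) ^ (q - 1) = (w ^ Nm) ^ j"
      unfolding g_def Nmd by (simp only: power_mult[symmetric]) (simp add: ac_simps)
    hence "(g ^ j) ^ (q - 1) = 1" using w_Nm Nm_def by simp
    hence "(g ^ j) ^ (q - 1 + 1) = g ^ j" by (simp only: power_add) simp
    thus ?thesis using q_gt1 by (simp add: F_iff)
  qed
  have inj: "inj_on (\<lambda>j. g ^ j) {..<q - 1}"
  proof (rule inj_onI)
    have *: "i < j \<Longrightarrow> j < q - 1 \<Longrightarrow> g ^ i = g ^ j \<Longrightarrow> False" for i j
    proof -
      assume a: "i < j" "j < q - 1" "g ^ i = g ^ j"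
      have "g ^ j = g ^ i * g ^ (j - i)" using a(1) by (simp flip: power_add)
      hence "g ^ (j - i) = 1" using a gnz by simp
      hence "w ^ (d * (j - i)) = 1" by (simp add: g_def power_mult)
      moreover have "d * (j - i) < Nm" using a dpos Nmd by simp
      moreover have "d * (j - i) > 0" using a dpos by simp
      ultimately show False using w_order Nm_def by blast
    qed
    fix i j assume "i \<in> {..<q - 1}" "j \<in> {..<q - 1}" "g ^ i = g ^ j"
    thus "i = j" using *[of i j] *[of j i] by (metis lessThan_iff linorder_neqE_nat)
  qed
  have sub: "insert 0 ((\<lambda>j. g ^ j) ` {..<q - 1}) \<subseteq> F" using inF F_0 by auto
  have "card (insert 0 ((\<lambda>j. g ^ j) ` {..<q - 1})) = q"
    using card_image[OF inj] gnz q_gt1 by (subst card_insert_disjoint) auto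
  hence ge: "q \<le> card F" using card_mono[OF finite_F sub] by simp
  have "card F \<le> q" using card_pow_fix_le[OF q_gt1] by (simp add: subfield_q_def)
  thus ?thesis using ge by simp
qed

lemma exists_trace_F: "\<exists>z\<in>F. field_trace p e z \<noteq> 0"
proof (rule ccontr)
  assume "\<not> ?thesis"
  hence "F \<subseteq> {x. field_trace p e x = 0}" by auto
  hence "card F \<le> card {x::'a. field_trace p e x = 0}" by (intro card_mono) auto
  hence "card F \<le> p ^ (e - 1)" using trace_poly_roots[OF e_ge] by linarith
  moreover have "p ^ (e - 1) < p ^ e" using p_gt1 e_ge by (intro power_strict_increasing) auto
  ultimately show False using card_F q_def by simp
qed

lemma psi_add_F: "x \<in> F \<Longrightarrow> y \<in> F \<Longrightarrow> canon_char p e (x + y) = canon_char p e x * canon_char p e y"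
  by (rule canon_add) (auto simp: F_pe)

lemma sum_psi_F: "(\<Sum>x\<in>F. canon_char p e x) = 0"
proof -
  obtain z where z: "z \<in> F" "field_trace p e z \<noteq> 0" using exists_trace_F by blast
  show ?thesis
    by (rule char_sum_zero[OF finite_F _ z(1)]) (use F_add psi_add_F z canon_nontriv F_pe in auto)
qed

lemma mult_F_image: "\<tau> \<in> F \<Longrightarrow> \<tau> \<noteq> 0 \<Longrightarrow> (\<lambda>d. d * \<tau>) ` F = F"
  by (rule endo_inj_surj) (auto intro: inj_onI F_mult)

lemma G1: assumes "\<tau> \<in> F"
  shows "(\<Sum>d\<in>F. canon_char p e (d * \<tau>)) = (if \<tau> = 0 then of_nat q else 0)"
proof (cases "\<tau> = 0")
  case True thus ?thesis by (simp add: canon_zero card_F)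
next
  case False
  have inj: "inj_on (\<lambda>d. d * \<tau>) F" using False by (auto intro: inj_onI)
  have "(\<Sum>d\<in>F. canon_char p e (d * \<tau>)) = (\<Sum>x\<in>(\<lambda>d. d * \<tau>) ` F. canon_char p e x)"
    by (simp add: sum.reindex[OF inj])
  also have "\<dots> = 0" using mult_F_image[OF assms False] sum_psi_F by simp
  finally show ?thesis using False by simp
qed

lemma Psi_add: "canon_char p (e * m) (x + y) = canon_char p (e * m) x * canon_char p (e * m) (y::'a)"
  by (rule canon_add) (auto simp: pow_pem)

lemma sum_Psi_mult: fixes s :: 'a assumes "s \<noteq> 0"
  shows "(\<Sum>x\<in>UNIV. canon_char p (e * m) (x * s)) = 0"
proof -
  have em: "e * m \<ge> 1" using e_ge m_gt by simp
  obtain z :: 'a where z: "field_trace p (e * m) z \<noteq> 0"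
  proof -
    have "card {x::'a. field_trace p (e * m) x = 0} \<le> p ^ (e * m - 1)" by (rule trace_poly_roots[OF em])
    moreover have "p ^ (e * m - 1) < p ^ (e * m)" using p_gt1 em by (intro power_strict_increasing) auto
    ultimately have "{x::'a. field_trace p (e * m) x = 0} \<noteq> UNIV" using card_U_p by auto
    thus ?thesis using that by auto
  qed
  have inj: "inj_on (\<lambda>d. d * s) UNIV" using assms by (auto intro: inj_onI)
  have im: "(\<lambda>d. d * s) ` UNIV = UNIV"
    using finite_UNIV_inj_surj[OF _ inj] by simp
  have "(\<Sum>x\<in>UNIV. canon_char p (e * m) (x * s)) = (\<Sum>x\<in>(\<lambda>d. d * s) ` UNIV. canon_char p (e * m) x)"
    by (simp add: sum.reindex[OF inj])
  also have "\<dots> = (\<Sum>x::'a\<in>UNIV. canon_char p (e * m) x)" using im by simp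
  also have "\<dots> = 0"
    by (rule char_sum_zero[where S=UNIV and z=z]) (use Psi_add canon_nontriv[OF pow_pem z] in auto)
  finally show ?thesis .
qed

abbreviation Tr :: "'a \<Rightarrow> 'a" where "Tr \<equiv> field_trace q m"

lemma q_pow_l: "q ^ l = p ^ (e * l)" using q_def by (simp add: power_mult)

lemma Tr_add: "Tr (x + y) = Tr x + Tr y"
  using trace_add[OF q_def] .

lemma Tr_sum: "Tr (sum f A) = (\<Sum>i\<in>A. Tr (f i))"
proof -
  have "Tr (sum f A) = (\<Sum>l<m. \<Sum>i\<in>A. f i ^ (q ^ l))"
    unfolding field_trace_def q_pow_l by (simp add: frob_sum)
  also have "\<dots> = (\<Sum>i\<in>A. Tr (f i))" unfolding field_trace_def by (rule sum.swap)
  finally show ?thesis .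
qed

lemma Tr_smul: "x \<in> F \<Longrightarrow> Tr (x * y) = x * Tr y"
  unfolding field_trace_def by (simp add: power_mult_distrib F_pow sum_distrib_left)

lemma Tr_F: "Tr y \<in> F"
  using trace_frob[OF q_def pow_qm[of y]] by (simp add: F_iff)

lemma Tr_trans: "field_trace p (e * m) z = field_trace p e (Tr z)"
proof -
  have "field_trace p e (Tr z) = (\<Sum>j<e. \<Sum>l<m. (z ^ (q ^ l)) ^ (p ^ j))"
    unfolding field_trace_def by (simp add: frob_sum)
  also have "\<dots> = (\<Sum>(j, l)\<in>{..<e} \<times> {..<m}. z ^ (p ^ (e * l + j)))"
    by (simp add: sum.cartesian_product q_pow_l power_add power_mult[symmetric] mult.commute)
  also have "\<dots> = (\<Sum>i<e * m. z ^ (p ^ i))"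
  proof (rule sum.reindex_bij_witness[where i = "\<lambda>t. (t mod e, t div e)" and j = "\<lambda>(a, b). e * b + a"])
    fix t assume t: "t \<in> {..<e * m}"
    show "(\<lambda>(a, b). e * b + a) (t mod e, t div e) = t" by simp
    show "(t mod e, t div e) \<in> {..<e} \<times> {..<m}" using t e_ge
      by (auto simp: less_mult_imp_div_less mult.commute)
  next
    fix ab assume ab: "ab \<in> {..<e} \<times> {..<m}"
    obtain a b where [simp]: "ab = (a, b)" by (cases ab)
    have a: "a < e" "b < m" using ab by auto
    show "(((\<lambda>(a, b). e * b + a) ab) mod e, ((\<lambda>(a, b). e * b + a) ab) div e) = ab"
      using a by simp
    have "e * b + a < e * b + e" using a by simp
    also have "\<dots> \<le> e * m" using a by (metis add.commute mult_Suc_right mult_le_mono2 Suc_le_eq)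
    finally show "(\<lambda>(a, b). e * b + a) ab \<in> {..<e * m}" by simp
    show "z ^ p ^ (\<lambda>(a, b). e * b + a) ab = (case ab of (j, l) \<Rightarrow> z ^ p ^ (e * l + j))" by simp
  qed
  finally show ?thesis unfolding field_trace_def by simp
qed

lemma Psi_psi: "canon_char p (e * m) z = canon_char p e (Tr z)"
  unfolding canon_char_def Tr_trans ..

abbreviation psi :: "'a \<Rightarrow> complex" where "psi \<equiv> canon_char p e"
abbreviation S :: "'a set" where "S \<equiv> F - {0}"

lemma two_nz: "(2::'a) \<noteq> 0"
proof
  assume "(2::'a) = 0"
  hence "(of_nat 2 :: 'a) = 0" by simp
  hence "p dvd 2" using of_nat_zero_iff by blast
  hence "p \<le> 2" by (rule dvd_imp_le) auto
  hence "p = 2" using p_gt1 by simp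
  thus False using p_odd by simp
qed

abbreviation C0a :: "'a set" where "C0a \<equiv> C0 q"
abbreviation C1a :: "'a set" where "C1a \<equiv> C1 q"

lemma C0_sub: "C0a \<subseteq> S" unfolding C0_def by auto
lemma C1_eq: "C1a = S - C0a" unfolding C1_def ..
lemma quad_C0: "x \<in> C0a \<Longrightarrow> quad_char q x = 1" by (simp add: quad_char_def)
lemma quad_C1: "x \<in> C1a \<Longrightarrow> quad_char q x = -1" using C1_eq by (simp add: quad_char_def)
lemma S_split: "S = C0a \<union> C1a" "C0a \<inter> C1a = {}" using C0_sub C1_eq by auto
lemma card_S: "card S = q - 1" using card_F F_0 by (simp add: card_Diff_singleton)

lemma card_C0: "2 * card C0a = q - 1"
proof -
  define h where "h = (\<lambda>y::'a. y ^ 2)"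
  have im: "h ` S = C0a"
  proof
    show "h ` S \<subseteq> C0a" unfolding h_def C0_def by (auto intro: F_mult simp: power2_eq_square)
    show "C0a \<subseteq> h ` S" unfolding h_def C0_def by (auto simp: power2_eq_square)
  qed
  have fib: "card {x\<in>S. h x = c} = 2" if c: "c \<in> C0a" for c
  proof -
    obtain y0 where y0: "y0 \<in> F" "y0 ^ 2 = c" "c \<noteq> 0" using c unfolding C0_def by auto
    have y0nz: "y0 \<noteq> 0" using y0 by auto
    have "{x\<in>S. h x = c} = {y0, - y0}"
    proof (intro equalityI subsetI)
      fix x assume "x \<in> {x\<in>S. h x = c}"
      hence "x ^ 2 = y0 ^ 2" using y0 unfolding h_def by auto
      hence "(x - y0) * (x + y0) = 0" by (simp add: algebra_simps power2_eq_square)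
      thus "x \<in> {y0, - y0}" by (auto simp: eq_neg_iff_add_eq_0)
    next
      fix x assume "x \<in> {y0, - y0}"
      thus "x \<in> {x\<in>S. h x = c}" using y0 y0nz F_neg unfolding h_def by auto
    qed
    moreover have "y0 \<noteq> - y0"
    proof
      assume "y0 = - y0"
      hence "2 * y0 = 0" by simp
      thus False using two_nz y0nz by simp
    qed
    ultimately show ?thesis by simp
  qed
  have "card S = (\<Sum>c\<in>h ` S. card {x\<in>S. h x = c})"
    using sum.image_gen[of S "\<lambda>_. (1::nat)" h] by simp
  also have "\<dots> = (\<Sum>c\<in>C0a. 2)" using im fib by simp
  finally show ?thesis using card_S by simp
qed

lemma card_C1: "card C1a = card C0a"
proof -
  have "card C1a = card S - card C0a"
    unfolding C1_eq using C0_sub by (simp add: card_Diff_subset finite_subset)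
  thus ?thesis using card_S card_C0 by simp
qed

lemma M_S: assumes "\<tau> \<in> S" shows "(\<lambda>y. y * \<tau>) ` S = S" "inj_on (\<lambda>y. y * \<tau>) S"
proof -
  show inj: "inj_on (\<lambda>y. y * \<tau>) S" using assms by (auto intro: inj_onI)
  show "(\<lambda>y. y * \<tau>) ` S = S"
    by (rule endo_inj_surj[OF _ _ inj]) (use assms F_mult in auto)
qed

lemma M_C:
  assumes "\<tau> \<in> S"
  shows "\<tau> \<in> C0a \<Longrightarrow> (\<lambda>y. y * \<tau>) ` C0a = C0a \<and> (\<lambda>y. y * \<tau>) ` C1a = C1a"
    and "\<tau> \<in> C1a \<Longrightarrow> (\<lambda>y. y * \<tau>) ` C0a = C1a \<and> (\<lambda>y. y * \<tau>) ` C1a = C0a"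
proof -
  let ?M = "\<lambda>y. y * \<tau>"
  have inj0: "inj_on ?M (C0a)" using M_S(2)[OF assms] C0_sub inj_on_subset by blast
  have cM: "card (?M ` C0a) = card C0a" using card_image[OF inj0] .
  have diff: "?M ` C1a = S - ?M ` C0a"
    unfolding C1_eq using M_S[OF assms] C0_sub by (simp add: inj_on_image_set_diff)
  have fin: "finite C1a" "finite C0a" by auto
  {
    assume t: "\<tau> \<in> C0a"
    have sub: "?M ` C0a \<subseteq> C0a"
    proof
      fix z assume "z \<in> ?M ` C0a"
      then obtain y where y: "y \<in> C0a" "z = y * \<tau>" by auto
      obtain u v where "u \<in> F" "u ^ 2 = \<tau>" "v \<in> F" "v ^ 2 = y" using y t unfolding C0_def by auto
      hence w: "z = (v * u) ^ 2" "v * u \<in> F" using y by (auto simp: power_mult_distrib F_mult)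
      have "z \<in> S" using y t C0_sub F_mult by auto
      thus "z \<in> C0a" using w unfolding C0_def by auto
    qed
    have e0: "?M ` C0a = C0a" by (rule card_subset_eq[OF fin(2) sub cM])
    show "?M ` C0a = C0a \<and> ?M ` C1a = C1a" using e0 diff C1_eq by simp
  }
  {
    assume t: "\<tau> \<in> C1a"
    have sub: "?M ` C0a \<subseteq> C1a"
    proof
      fix z assume "z \<in> ?M ` C0a"
      then obtain y where y: "y \<in> C0a" "z = y * \<tau>" by auto
      obtain v where v: "v \<in> F" "v ^ 2 = y" "y \<noteq> 0" using y unfolding C0_def by auto
      have zS: "z \<in> S" using y t C0_sub C1_eq F_mult by auto
      have "z \<notin> C0a"
      proof
        assume "z \<in> C0a"
        then obtain u where u: "u \<in> F" "u ^ 2 = z" unfolding C0_def by auto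
        have "\<tau> = (u / v) ^ 2" using u v y by (auto simp: power_divide)
        moreover have "u / v \<in> F" using u v F_div by auto
        ultimately have "\<tau> \<in> C0a" using assms unfolding C0_def by auto
        thus False using t C1_eq by auto
      qed
      thus "z \<in> C1a" using zS C1_eq by auto
    qed
    have e0: "?M ` C0a = C1a"
      by (rule card_subset_eq[OF fin(1) sub]) (use cM card_C1 in simp)
    show "?M ` C0a = C1a \<and> ?M ` C1a = C0a" using e0 diff C1_eq C0_sub by auto
  }
qed

lemma sum_S_psi: "(\<Sum>x\<in>S. psi x) = -1"
proof -
  have "(\<Sum>x\<in>F. psi x) = psi 0 + (\<Sum>x\<in>S. psi x)"
    using F_0 by (simp add: sum.remove)
  thus ?thesis using sum_psi_F canon_zero by (simp add: eq_neg_iff_add_eq_0 add.commute)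
qed


lemma S0S1:
  "(\<Sum>x\<in>C0a. psi x) = (-1 + gauss_quad p e TYPE('a)) / 2" "(\<Sum>x\<in>C1a. psi x) = (-1 - gauss_quad p e TYPE('a)) / 2"
proof -
  have fin: "finite C1a" "finite C0a" by auto
  have a: "(\<Sum>x\<in>C0a. psi x) + (\<Sum>x\<in>C1a. psi x) = -1"
    using sum_S_psi S_split sum.union_disjoint[OF fin(2) fin(1) S_split(2), of psi] by simp
  have "gauss_quad p e TYPE('a) = (\<Sum>x\<in>S. quad_char q x * psi x)"
    unfolding gauss_quad_def q_def ..
  also have "\<dots> = (\<Sum>x\<in>C0a. quad_char q x * psi x) + (\<Sum>x\<in>C1a. quad_char q x * psi x)"
    using S_split sum.union_disjoint[OF fin(2) fin(1) S_split(2)] by simp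
  also have "\<dots> = (\<Sum>x\<in>C0a. psi x) - (\<Sum>x\<in>C1a. psi x)"
    by (simp add: quad_C0 quad_C1 sum_negf)
  finally have b: "gauss_quad p e TYPE('a) = (\<Sum>x\<in>C0a. psi x) - (\<Sum>x\<in>C1a. psi x)" .
  have b': "gauss_quad p e TYPE('a) + (\<Sum>x\<in>C1a. psi x) = (\<Sum>x\<in>C0a. psi x)" using b by simp
  show "(\<Sum>x\<in>C0a. psi x) = (-1 + gauss_quad p e TYPE('a)) / 2" "(\<Sum>x\<in>C1a. psi x) = (-1 - gauss_quad p e TYPE('a)) / 2"
    using lin2[OF a b'] by auto
qed

lemma G2:
  assumes "\<tau> \<in> F"
  shows "(\<Sum>y\<in>C0a. psi (y * \<tau>)) =
    (if \<tau> = 0 then (of_nat q - 1) / 2 else if \<tau> \<in> C0a then (-1 + gauss_quad p e TYPE('a)) / 2 else (-1 - gauss_quad p e TYPE('a)) / 2)"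
proof (cases "\<tau> = 0")
  case True
  have "2 * (of_nat (card C0a) :: complex) = of_nat q - 1"
    using card_C0 q_gt1 by (metis of_nat_1 of_nat_diff of_nat_mult of_nat_numeral less_imp_le)
  thus ?thesis using True canon_zero by (simp add: field_simps)
next
  case False
  hence tS: "\<tau> \<in> S" using assms by simp
  have inj: "inj_on (\<lambda>y. y * \<tau>) (C0a)" using M_S(2)[OF tS] C0_sub inj_on_subset by blast
  have r: "(\<Sum>y\<in>C0a. psi (y * \<tau>)) = (\<Sum>x\<in>(\<lambda>y. y * \<tau>) ` C0a. psi x)"
    by (simp add: sum.reindex[OF inj])
  show ?thesis
  proof (cases "\<tau> \<in> C0a")
    case True
    thus ?thesis using r M_C(1)[OF tS True] S0S1 False by simp
  next
    case c: False
    hence "\<tau> \<in> C1a" using tS C1_eq by auto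
    thus ?thesis using r M_C(2)[OF tS] S0S1 False c by simp
  qed
qed

lemma Psi_zero: "canon_char p (e * m) (0::'a) = 1" by (rule canon_zero)

lemma Psi_sum: "finite I \<Longrightarrow> (\<Prod>i\<in>I. canon_char p (e * m) (f i :: 'a)) = canon_char p (e * m) (sum f I)"
  by (induction I rule: finite_induct) (auto simp: Psi_zero Psi_add)

end

locale ffab = ff p e q m w
  for p e q m :: nat and w :: "'a::{finite,field}" +
  fixes k :: nat and a :: "nat \<Rightarrow> 'a" and b :: 'a
  assumes m_odd: "odd m" and k_def: "k = (m - 1) div 2"
    and a1: "a 1 \<in> Aset q m"
    and al: "\<forall>l\<in>{2..k}. a l \<in> Aset q m \<inter> (\<Inter>j\<in>{1..<l}. Hset q m (a j))"
    and indep: "\<forall>c :: nat \<Rightarrow> 'a. (\<forall>i\<in>{1..k}. c i \<in> subfield_q q)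
            \<and> (\<Sum>i=1..k. c i * a i) = 0 \<longrightarrow> (\<forall>i\<in>{1..k}. c i = 0)"
    and bH: "b \<in> (\<Inter>j\<in>{1..k}. Hset q m (a j)) - Aset q m"
begin

lemma m_eq: "m = 2 * k + 1" using m_odd k_def m_gt by presburger
lemma k_ge1: "k \<ge> 1" using m_odd m_gt k_def by presburger

lemma aA: "i \<in> {1..k} \<Longrightarrow> Tr (a i * a i) = 0"
proof -
  assume i: "i \<in> {1..k}"
  have "a i \<in> Aset q m"
  proof (cases "i = 1")
    case True thus ?thesis using a1 by simp
  next
    case False thus ?thesis using al i by auto
  qed
  thus ?thesis by (simp add: Aset_def power2_eq_square)
qed

lemma aH: "i \<in> {1..k} \<Longrightarrow> j \<in> {1..k} \<Longrightarrow> i < j \<Longrightarrow> Tr (a j * a i) = 0"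
proof -
  assume "i \<in> {1..k}" "j \<in> {1..k}" "i < j"
  hence "a j \<in> Hset q m (a i)" using al by auto
  thus ?thesis by (simp add: Hset_def)
qed

lemma aa0: "i \<in> {1..k} \<Longrightarrow> j \<in> {1..k} \<Longrightarrow> Tr (a i * a j) = 0"
proof -
  assume i: "i \<in> {1..k}" and j: "j \<in> {1..k}"
  consider "i = j" | "i < j" | "j < i" by linarith
  thus ?thesis
  proof cases
    case 1 thus ?thesis using aA i by simp
  next
    case 2 thus ?thesis using aH[OF i j] by (simp add: mult.commute)
  next
    case 3 thus ?thesis using aH[OF j i] by simp
  qed
qed

lemma bnz: "b \<noteq> 0" using bH k_ge1 by (auto simp: Hset_def)
lemma ba0: "j \<in> {1..k} \<Longrightarrow> Tr (b * a j) = 0" using bH by (auto simp: Hset_def)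
lemma bb: "Tr (b * b) \<noteq> 0" using bH bnz by (auto simp: Aset_def power2_eq_square)

definition lin :: "(nat \<Rightarrow> 'a) \<Rightarrow> 'a" where "lin x = (\<Sum>i=1..k. a i * x i)"

abbreviation P :: "(nat \<Rightarrow> 'a) set" where "P \<equiv> PiE {1..k} (\<lambda>_. F)"

lemma Tr_comb:
  assumes x: "\<forall>i\<in>{1..k}. x i \<in> F" and y: "y \<in> F"
  shows "Tr ((lin x + b * y) * c) = (\<Sum>i=1..k. x i * Tr (a i * c)) + y * Tr (b * c)"
proof -
  have "(lin x + b * y) * c = (\<Sum>i=1..k. x i * (a i * c)) + y * (b * c)"
    unfolding lin_def by (simp add: sum_distrib_right sum_distrib_left algebra_simps)
  also have "Tr \<dots> = (\<Sum>i=1..k. x i * Tr (a i * c)) + y * Tr (b * c)"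
    using x y by (simp add: Tr_add Tr_sum Tr_smul)
  finally show ?thesis .
qed

lemma Tr_comb_b:
  assumes x: "\<forall>i\<in>{1..k}. x i \<in> F" and y: "y \<in> F"
  shows "Tr ((lin x + b * y) * b) = y * Tr (b * b)"
proof -
  have "(\<Sum>i=1..k. x i * Tr (a i * b)) = 0"
    using ba0 by (simp add: mult.commute)
  thus ?thesis using Tr_comb[OF x y] by simp
qed

lemma inj_param:
  assumes x: "\<forall>i\<in>{1..k}. x i \<in> F" and y: "y \<in> F"
    and x': "\<forall>i\<in>{1..k}. x' i \<in> F" and y': "y' \<in> F"
    and eq: "lin x + b * y = lin x' + b * y'"
  shows "y = y'" "\<forall>i\<in>{1..k}. x i = x' i"
proof -
  have "Tr ((lin x + b * y) * b) = Tr ((lin x' + b * y') * b)" using eq by simp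
  hence "y * Tr (b * b) = y' * Tr (b * b)"
    by (simp only: Tr_comb_b[OF x y] Tr_comb_b[OF x' y'])
  thus yy: "y = y'" using bb by simp
  hence "lin x = lin x'" using eq by simp
  hence "(\<Sum>i=1..k. (x i - x' i) * a i) = 0"
    unfolding lin_def by (simp add: sum_subtractf algebra_simps)
  moreover have "\<forall>i\<in>{1..k}. x i - x' i \<in> F" using x x' F_diff by auto
  ultimately have "\<forall>i\<in>{1..k}. x i - x' i = 0" using indep[rule_format, of "\<lambda>i. x i - x' i"] by blast
  thus "\<forall>i\<in>{1..k}. x i = x' i" by simp
qed

definition W :: "'a set" where "W = {x. \<forall>i\<in>{1..k}. Tr (x * a i) = 0}"

lemma card_P: "card P = q ^ k" by (simp add: card_PiE card_F)

lemma chi_eval: "(\<Prod>i\<in>{1..k}. \<Sum>d\<in>F. psi (d * Tr (x * a i))) = (if x \<in> W then of_nat q ^ k else 0)"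
proof -
  have "(\<Prod>i\<in>{1..k}. \<Sum>d\<in>F. psi (d * Tr (x * a i))) =
        (\<Prod>i\<in>{1..k}. if Tr (x * a i) = 0 then of_nat q else 0)"
    by (intro prod.cong refl) (simp add: G1 Tr_F)
  also have "\<dots> = (if x \<in> W then of_nat q ^ k else 0)"
  proof (cases "x \<in> W")
    case True thus ?thesis by (simp add: W_def)
  next
    case False
    then obtain i where "i \<in> {1..k}" "Tr (x * a i) \<noteq> 0" by (auto simp: W_def)
    thus ?thesis using False by (intro trans[OF prod_zero]) auto
  qed
  finally show ?thesis .
qed

lemma chi_expand: "(\<Prod>i\<in>{1..k}. \<Sum>d\<in>F. psi (d * Tr (x * a i))) = (\<Sum>d\<in>P. canon_char p (e * m) (x * lin d))"
proof -
  have "(\<Prod>i\<in>{1..k}. \<Sum>d\<in>F. psi (d * Tr (x * a i))) = (\<Sum>d\<in>P. \<Prod>i\<in>{1..k}. psi (d i * Tr (x * a i)))"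
    by (rule prod_sum_PiE) auto
  also have "\<dots> = (\<Sum>d\<in>P. canon_char p (e * m) (x * lin d))"
  proof (rule sum.cong[OF refl])
    fix d assume d: "d \<in> P"
    have "(\<Prod>i\<in>{1..k}. psi (d i * Tr (x * a i))) = (\<Prod>i\<in>{1..k}. canon_char p (e * m) (d i * (x * a i)))"
    proof (rule prod.cong[OF refl])
      fix i assume "i \<in> {1..k}"
      hence "d i \<in> F" using d by blast
      hence "Tr (d i * (x * a i)) = d i * Tr (x * a i)" by (rule Tr_smul)
      thus "psi (d i * Tr (x * a i)) = canon_char p (e * m) (d i * (x * a i))"
        by (simp only: Psi_psi)
    qed
    also have "\<dots> = canon_char p (e * m) (\<Sum>i\<in>{1..k}. d i * (x * a i))"
      by (rule Psi_sum) simp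
    also have "(\<Sum>i\<in>{1..k}. d i * (x * a i)) = x * lin d"
      unfolding lin_def sum_distrib_left by (rule sum.cong[OF refl]) (simp only: mult_ac)
    finally show "(\<Prod>i\<in>{1..k}. psi (d i * Tr (x * a i))) = canon_char p (e * m) (x * lin d)" .
  qed
  finally show ?thesis .
qed

lemma lin_zero_set: "{d\<in>P. lin d = 0} = {restrict (\<lambda>_. 0::'a) {1..k}}"
proof (intro equalityI subsetI)
  fix d assume d: "d \<in> {d\<in>P. lin d = 0}"
  have "(\<Sum>i=1..k. d i * a i) = 0" using d unfolding lin_def by (simp add: mult.commute)
  moreover have "\<forall>i\<in>{1..k}. d i \<in> F" using d by blast
  ultimately have z: "\<forall>i\<in>{1..k}. d i = 0" using indep[rule_format, of d] by blast
  have "d = restrict (\<lambda>_. 0::'a) {1..k}"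
  proof
    fix i show "d i = restrict (\<lambda>_. 0::'a) {1..k} i"
    proof (cases "i \<in> {1..k}")
      case True thus ?thesis using z by simp
    next
      case False thus ?thesis using d PiE_arb[of d "{1..k}" "\<lambda>_. F" i] by auto
    qed
  qed
  thus "d \<in> {restrict (\<lambda>_. 0::'a) {1..k}}" by simp
next
  fix d assume "d \<in> {restrict (\<lambda>_. 0::'a) {1..k}}"
  hence d: "d = restrict (\<lambda>_. 0::'a) {1..k}" by simp
  have "d \<in> P" unfolding d using F_0 by simp
  moreover have "lin d = 0" unfolding lin_def d by simp
  ultimately show "d \<in> {d\<in>P. lin d = 0}" by simp
qed

lemma card_W: "card W = q ^ (k + 1)"
proof -
  have "(\<Sum>x\<in>UNIV. \<Prod>i\<in>{1..k}. \<Sum>d\<in>F. psi (d * Tr (x * a i))) = (\<Sum>x\<in>UNIV. if x \<in> W then of_nat q ^ k else (0::complex))"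
    by (intro sum.cong refl) (rule chi_eval)
  also have "\<dots> = (\<Sum>x\<in>{x\<in>UNIV. x \<in> W}. of_nat q ^ k)"
    by (rule sum.inter_filter[symmetric]) simp
  also have "\<dots> = of_nat (card W) * of_nat q ^ k" by simp
  finally have l: "(\<Sum>x\<in>UNIV. \<Prod>i\<in>{1..k}. \<Sum>d\<in>F. psi (d * Tr (x * a i))) = of_nat (card W) * of_nat q ^ k" .
  have "(\<Sum>x\<in>UNIV. \<Prod>i\<in>{1..k}. \<Sum>d\<in>F. psi (d * Tr (x * a i))) = (\<Sum>x\<in>UNIV. \<Sum>d\<in>P. canon_char p (e * m) (x * lin d))"
    by (intro sum.cong refl) (rule chi_expand)
  also have "\<dots> = (\<Sum>d\<in>P. \<Sum>x\<in>UNIV. canon_char p (e * m) (x * lin d))" by (rule sum.swap)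
  also have "\<dots> = (\<Sum>d\<in>P. if lin d = 0 then of_nat (q ^ m) else 0)"
    by (intro sum.cong refl) (auto simp: sum_Psi_mult Psi_zero card_U)
  also have "\<dots> = (\<Sum>d\<in>{d\<in>P. lin d = 0}. of_nat (q ^ m))"
    by (rule sum.inter_filter[symmetric]) (simp add: finite_PiE)
  also have "\<dots> = of_nat (card {d\<in>P. lin d = 0}) * of_nat (q ^ m)" by simp
  also have "\<dots> = of_nat (q ^ m)" unfolding lin_zero_set by simp
  finally have "of_nat (card W) * of_nat q ^ k = (of_nat (q ^ m) :: complex)" using l by simp
  hence "of_nat (card W * q ^ k) = (of_nat (q ^ m) :: complex)" by simp
  hence e1: "card W * q ^ k = q ^ m" using of_nat_eq_iff by blast
  have "q ^ (k + 1) * q ^ k = q ^ (k + 1 + k)" by (simp only: power_add)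
  also have "k + 1 + k = m" using m_eq by simp
  finally have "card W * q ^ k = q ^ (k + 1) * q ^ k" using e1 by simp
  thus ?thesis using q_gt1 by simp
qed

definition V :: "'a set" where "V = (\<lambda>(x, y). lin x + b * y) ` (P \<times> F)"

lemma V_sub_W: "V \<subseteq> W"
proof
  fix z assume "z \<in> V"
  then obtain x y where xy: "x \<in> P" "y \<in> F" "z = lin x + b * y" by (auto simp: V_def)
  have "Tr (z * a j) = 0" if j: "j \<in> {1..k}" for j
  proof -
    have "Tr (z * a j) = (\<Sum>i=1..k. x i * Tr (a i * a j)) + y * Tr (b * a j)"
      using Tr_comb xy by (simp add: PiE_iff)
    thus ?thesis using aa0 ba0 j by simp
  qed
  thus "z \<in> W" by (simp add: W_def)
qed

lemma inj_V: "inj_on (\<lambda>(x, y). lin x + b * y) (P \<times> F)"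
proof (rule inj_onI)
  fix u v assume u: "u \<in> P \<times> F" and v: "v \<in> P \<times> F"
    and eq: "(\<lambda>(x, y). lin x + b * y) u = (\<lambda>(x, y). lin x + b * y) v"
  obtain x y where [simp]: "u = (x, y)" by (cases u)
  obtain x' y' where [simp]: "v = (x', y')" by (cases v)
  have a: "x \<in> P" "y \<in> F" "x' \<in> P" "y' \<in> F" "lin x + b * y = lin x' + b * y'" using u v eq by auto
  have h: "\<forall>i\<in>{1..k}. x i \<in> F" "\<forall>i\<in>{1..k}. x' i \<in> F" using a by (auto simp: PiE_iff)
  note r = inj_param[OF h(1) a(2) h(2) a(4) a(5)]
  have "x = x'" using r(2) a(1,3) by (intro PiE_ext[of x "{1..k}" "\<lambda>_. F" x']) auto
  thus "u = v" using r(1) by simp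
qed

lemma V_eq_W: "V = W"
proof -
  have "card V = card (P \<times> F)" unfolding V_def by (rule card_image[OF inj_V])
  also have "\<dots> = card P * card F" by (rule card_cartesian_product)
  also have "\<dots> = q ^ (k + 1)" unfolding card_P card_F by simp
  finally have "card V = card W" using card_W by simp
  thus ?thesis by (intro card_subset_eq[OF _ V_sub_W]) simp_all
qed

lemma key:
  assumes c: "c \<in> W"
  shows "Tr (c * c) = 0 \<longleftrightarrow> Tr (c * b) = 0"
proof -
  have "c \<in> V" using c V_eq_W by simp
  then obtain u where u: "u \<in> P \<times> F" "c = (\<lambda>(x, y). lin x + b * y) u" unfolding V_def by (rule imageE)
  obtain x y where uxy: "u = (x, y)" by (cases u)
  have xy: "x \<in> P" "y \<in> F" "c = lin x + b * y" using u unfolding uxy by simp_all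
  have h: "\<forall>i\<in>{1..k}. x i \<in> F" using xy(1) by blast
  have cb: "Tr (c * b) = y * Tr (b * b)" unfolding xy(3) by (rule Tr_comb_b[OF h xy(2)])
  have "Tr (c * c) = (\<Sum>i=1..k. x i * Tr (a i * c)) + y * Tr (b * c)"
    by (subst (1) xy(3)) (rule Tr_comb[OF h xy(2)])
  also have "(\<Sum>i=1..k. x i * Tr (a i * c)) = 0"
    using c unfolding W_def by (intro sum.neutral) (simp add: mult.commute)
  also have "Tr (b * c) = Tr (c * b)" by (simp only: mult.commute)
  finally have "Tr (c * c) = y * (y * Tr (b * b))" using cb by simp
  thus ?thesis using cb bb by simp
qed

lemma main:
  fixes t :: int and B :: "'a set"
  assumes B_def: "B = {(\<Sum>i=1..k. a i * x i) + b * y | x y.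
               (\<forall>i\<in>{1..k}. x i \<in> subfield_q q) \<and> y \<in> C0 q}"
  shows "(\<Sum>z\<in>(\<lambda>u. w powi t * u) ` B. canon_char p (e * m) z) =
    (if field_trace q m (w powi t * b) \<in> C0 q
        \<and> w powi t \<in> (\<Inter>j\<in>{1..k}. Hset q m (a j)) - Aset q m
     then of_nat q ^ k * ((-1 + gauss_quad p e TYPE('a)) / 2)
     else if field_trace q m (w powi t * b) \<in> C1 q
        \<and> w powi t \<in> (\<Inter>j\<in>{1..k}. Hset q m (a j)) - Aset q m
     then of_nat q ^ k * ((-1 - gauss_quad p e TYPE('a)) / 2)
     else if w powi t \<in> Aset q m \<inter> (\<Inter>j\<in>{1..k}. Hset q m (a j))
     then of_nat q ^ k * (of_nat q - 1) / 2
     else 0)"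
proof -
  define c where "c = w powi t"
  have cnz: "c \<noteq> 0" unfolding c_def using w_nz by simp
  define f where "f = (\<lambda>(x, y). lin x + b * y)"
  have Beq: "B = f ` (P \<times> C0a)"
  proof (intro equalityI subsetI)
    fix z assume "z \<in> B"
    then obtain x y where xy: "\<forall>i\<in>{1..k}. x i \<in> F" "y \<in> C0a" "z = (\<Sum>i=1..k. a i * x i) + b * y"
      unfolding B_def by blast
    have "restrict x {1..k} \<in> P" using xy(1) by simp
    moreover have "lin (restrict x {1..k}) = (\<Sum>i=1..k. a i * x i)"
      unfolding lin_def by (rule sum.cong) simp_all
    ultimately show "z \<in> f ` (P \<times> C0a)" using xy unfolding f_def by (intro image_eqI[of _ _ "(restrict x {1..k}, y)"]) auto
  next
    fix z assume "z \<in> f ` (P \<times> C0a)"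
    then obtain u where u: "u \<in> P \<times> C0a" "z = f u" by (rule imageE)
    obtain x y where uxy: "u = (x, y)" by (cases u)
    have xy: "x \<in> P" "y \<in> C0a" "z = lin x + b * y" using u unfolding uxy f_def by simp_all
    have "\<forall>i\<in>{1..k}. x i \<in> F" using xy(1) by blast
    thus "z \<in> B" unfolding B_def xy(3) lin_def using xy(2) by blast
  qed
  have "P \<times> C0a \<subseteq> P \<times> F" using C0_sub by blast
  hence injf: "inj_on f (P \<times> C0a)" unfolding f_def by (rule inj_on_subset[OF inj_V])
  have injc: "inj_on (\<lambda>u. c * u) B" using cnz by (auto intro: inj_onI)
  have fin: "finite P" "finite C0a" by (simp_all add: finite_PiE)
  define Psi :: "'a \<Rightarrow> complex" where "Psi = canon_char p (e * m)"
  have "(\<Sum>z\<in>(\<lambda>u. c * u) ` B. Psi z) = (\<Sum>u\<in>B. Psi (c * u))"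
    by (simp add: sum.reindex[OF injc])
  also have "\<dots> = (\<Sum>u\<in>P \<times> C0a. Psi (c * f u))"
    unfolding Beq sum.reindex[OF injf] comp_def ..
  also have "\<dots> = (\<Sum>(x, y)\<in>P \<times> C0a. Psi (c * lin x) * Psi (c * (b * y)))"
    by (rule sum.cong[OF refl]) (clarsimp simp: f_def Psi_def distrib_left Psi_add)
  also have "\<dots> = (\<Sum>x\<in>P. \<Sum>y\<in>C0a. Psi (c * lin x) * Psi (c * (b * y)))"
    by (rule sum.cartesian_product[symmetric])
  also have "\<dots> = (\<Sum>x\<in>P. Psi (c * lin x)) * (\<Sum>y\<in>C0a. Psi (c * (b * y)))"
    by (simp add: sum_product)
  also have "(\<Sum>x\<in>P. Psi (c * lin x)) = (if c \<in> W then of_nat q ^ k else 0)"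
    unfolding Psi_def using chi_expand[of c] chi_eval[of c] by simp
  also have "(\<Sum>y\<in>C0a. Psi (c * (b * y))) = (\<Sum>y\<in>C0a. psi (y * Tr (c * b)))"
  proof (rule sum.cong[OF refl])
    fix y assume "y \<in> C0a"
    hence "y \<in> F" using C0_sub by blast
    hence "Tr (y * (c * b)) = y * Tr (c * b)" by (rule Tr_smul)
    moreover have "c * (b * y) = y * (c * b)" by (simp only: mult_ac)
    ultimately show "Psi (c * (b * y)) = psi (y * Tr (c * b))" unfolding Psi_def by (simp only: Psi_psi)
  qed
  also have "\<dots> = (if Tr (c * b) = 0 then (of_nat q - 1) / 2 else if Tr (c * b) \<in> C0a
      then (-1 + gauss_quad p e TYPE('a)) / 2 else (-1 - gauss_quad p e TYPE('a)) / 2)"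
    by (rule G2[OF Tr_F])
  finally have L: "(\<Sum>z\<in>(\<lambda>u. c * u) ` B. Psi z) = (if c \<in> W then of_nat q ^ k else 0) *
     (if Tr (c * b) = 0 then (of_nat q - 1) / 2 else if Tr (c * b) \<in> C0a
      then (-1 + gauss_quad p e TYPE('a)) / 2 else (-1 - gauss_quad p e TYPE('a)) / 2)" .
  have HW: "c \<in> (\<Inter>j\<in>{1..k}. Hset q m (a j)) \<longleftrightarrow> c \<in> W"
    using cnz k_ge1 by (auto simp: Hset_def W_def)
  have AW: "c \<in> Aset q m \<longleftrightarrow> Tr (c * c) = 0"
    using cnz by (simp add: Aset_def power2_eq_square)
  have tF: "Tr (c * b) \<in> F" by (rule Tr_F)
  have C1iff: "Tr (c * b) \<in> C1a \<longleftrightarrow> Tr (c * b) \<noteq> 0 \<and> Tr (c * b) \<notin> C0a"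
    using tF C1_eq by auto
  have nC0: "(0::'a) \<notin> C0a" using C0_sub by blast
  have R: "(\<Sum>z\<in>(\<lambda>u. c * u) ` B. Psi z) =
    (if Tr (c * b) \<in> C0a
        \<and> c \<in> (\<Inter>j\<in>{1..k}. Hset q m (a j)) - Aset q m
     then of_nat q ^ k * ((-1 + gauss_quad p e TYPE('a)) / 2)
     else if Tr (c * b) \<in> C1a
        \<and> c \<in> (\<Inter>j\<in>{1..k}. Hset q m (a j)) - Aset q m
     then of_nat q ^ k * ((-1 - gauss_quad p e TYPE('a)) / 2)
     else if c \<in> Aset q m \<inter> (\<Inter>j\<in>{1..k}. Hset q m (a j))
     then of_nat q ^ k * (of_nat q - 1) / 2
     else 0)"
  proof (cases "c \<in> W")
    case False
    thus ?thesis using HW L by auto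
  next
    case True
    note k = key[OF True]
    show ?thesis
    proof (cases "Tr (c * b) = 0")
      case z: True
      thus ?thesis using True HW AW k nC0 C1iff L by (simp add: times_divide_eq_right)
    next
      case nz: False
      thus ?thesis using True HW AW k C1iff L by auto
    qed
  qed
  show ?thesis using R unfolding c_def Psi_def .
qed

end

theorem lemma7p6:
  fixes p e q m k :: nat and \<omega> b :: "'a::{finite,field}" and a :: "nat \<Rightarrow> 'a"
    and B :: "'a set" and t :: int
  assumes "prime p" and "odd p" and "e \<ge> 1" and "q = p ^ e"
    and "of_nat p = (0::'a)"
    and "card (UNIV :: 'a set) = q ^ m"
    and "m > 1" and "odd m"
    and "\<omega> \<noteq> 0" and "\<forall>x::'a. x \<noteq> 0 \<longrightarrow> (\<exists>n::nat. x = \<omega> ^ n)"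
    and "k = (m - 1) div 2"
    and "a 1 \<in> Aset q m"
    and "\<forall>l\<in>{2..k}. a l \<in> Aset q m \<inter> (\<Inter>j\<in>{1..<l}. Hset q m (a j))"
    and "\<forall>c :: nat \<Rightarrow> 'a. (\<forall>i\<in>{1..k}. c i \<in> subfield_q q)
            \<and> (\<Sum>i=1..k. c i * a i) = 0 \<longrightarrow> (\<forall>i\<in>{1..k}. c i = 0)"
    and "b \<in> (\<Inter>j\<in>{1..k}. Hset q m (a j)) - Aset q m"
    and "B = {(\<Sum>i=1..k. a i * x i) + b * y | x y.
               (\<forall>i\<in>{1..k}. x i \<in> subfield_q q) \<and> y \<in> C0 q}"
  shows "(\<Sum>z\<in>(\<lambda>u. \<omega> powi t * u) ` B. canon_char p (e * m) z) =
    (if field_trace q m (\<omega> powi t * b) \<in> C0 q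
        \<and> \<omega> powi t \<in> (\<Inter>j\<in>{1..k}. Hset q m (a j)) - Aset q m
     then of_nat q ^ k * ((-1 + gauss_quad p e TYPE('a)) / 2)
     else if field_trace q m (\<omega> powi t * b) \<in> C1 q
        \<and> \<omega> powi t \<in> (\<Inter>j\<in>{1..k}. Hset q m (a j)) - Aset q m
     then of_nat q ^ k * ((-1 - gauss_quad p e TYPE('a)) / 2)
     else if \<omega> powi t \<in> Aset q m \<inter> (\<Inter>j\<in>{1..k}. Hset q m (a j))
     then of_nat q ^ k * (of_nat q - 1) / 2
     else 0)"
proof -
  interpret ffab p e q m \<omega> k a b
    by unfold_locales (use assms in auto)
  show ?thesis by (rule main[OF assms(16)])
qed

end
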